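(* If $Q$ is a Jordan loop and $x\in Q$, then $x^3$, $x^4$ and $x^5$ are well-defined.
   Context: A loop is a set $Q$ with a binary operation (juxtaposition) and neutral element $e$ such that for all $a,b$ the equations $ax=b$, $ya=b$ have unique solutions. A Jordan loop is a commutative loop satisfying $x^2(yx)=(x^2y)x$. For $k\ge 0$, $x^k$ denotes the right-associated product $L_x^k(e)=x(x(\cdots(xe)\cdots))$ with $k$ factors $x$ (so $x^0=e$). We say $x^k$ is well-defined if every way of bracketing a product of $k$ copies of $x$ gives the same value. *)

theory Defs
  imports Main
begin

definition is_loop :: "('a \<Rightarrow> 'a \<Rightarrow> 'a) \<Rightarrow> 'a \<Rightarrow> bool" where
  "is_loop m e \<longleftrightarrow> (\<forall>x. m e x = x \<and> m x e = x)
     \<and> (\<forall>a b. \<exists>!x. m a x = b) \<and> (\<forall>a b. \<exists>!y. m y a = b)"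

definition jordan_loop :: "('a \<Rightarrow> 'a \<Rightarrow> 'a) \<Rightarrow> 'a \<Rightarrow> bool" where
  "jordan_loop m e \<longleftrightarrow> is_loop m e \<and> (\<forall>x y. m x y = m y x)
     \<and> (\<forall>x y. m (m x x) (m y x) = m (m (m x x) y) x)"

definition lpow :: "('a \<Rightarrow> 'a \<Rightarrow> 'a) \<Rightarrow> 'a \<Rightarrow> 'a \<Rightarrow> nat \<Rightarrow> 'a" where
  "lpow m e x k = (m x ^^ k) e"

text \<open>Bracketings of a product of copies of x: full binary trees.\<close>
datatype btree = Leaf | Node btree btree

fun leaves :: "btree \<Rightarrow> nat" where
  "leaves Leaf = 1"
| "leaves (Node l r) = leaves l + leaves r"

fun beval :: "('a \<Rightarrow> 'a \<Rightarrow> 'a) \<Rightarrow> 'a \<Rightarrow> btree \<Rightarrow> 'a" where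
  "beval m x Leaf = x"
| "beval m x (Node l r) = m (beval m x l) (beval m x r)"

definition pow_well_defined :: "('a \<Rightarrow> 'a \<Rightarrow> 'a) \<Rightarrow> 'a \<Rightarrow> 'a \<Rightarrow> nat \<Rightarrow> bool" where
  "pow_well_defined m e x k \<longleftrightarrow>
     (\<forall>t. leaves t = k \<longrightarrow> beval m x t = lpow m e x k)"

end

theory Submission
  imports Defs
begin

lemma leaves_pos: "leaves t \<ge> 1"
  by (induction t) auto

lemma L1: "leaves t = 1 \<Longrightarrow> beval m x t = x"
proof (cases t)
  case (Node l r)
  assume "leaves t = 1"
  with Node leaves_pos[of l] leaves_pos[of r] show ?thesis by auto
qed simp

lemma L2: "leaves t = 2 \<Longrightarrow> beval m x t = m x x"
proof (cases t)
  case (Node l r)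
  assume "leaves t = 2"
  with Node leaves_pos[of l] leaves_pos[of r] have "leaves l = 1" "leaves r = 1" by auto
  with Node show ?thesis by (simp add: L1)
qed simp

lemma L3:
  assumes c: "\<And>a b. m a b = m b a" and "leaves t = 3"
  shows "beval m x t = m x (m x x)"
proof (cases t)
  case (Node l r)
  with assms(2) leaves_pos[of l] leaves_pos[of r]
  have "(leaves l = 1 \<and> leaves r = 2) \<or> (leaves l = 2 \<and> leaves r = 1)" by auto
  with Node show ?thesis by (auto simp: L1 L2 c)
qed (use assms in simp)

lemma L4:
  assumes c: "\<And>a b. m a b = m b a" and j: "m (m x x) (m x x) = m (m (m x x) x) x"
    and "leaves t = 4"
  shows "beval m x t = m x (m x (m x x))"
proof (cases t)
  case (Node l r)
  with assms(3) leaves_pos[of l] leaves_pos[of r]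
  have "(leaves l = 1 \<and> leaves r = 3) \<or> (leaves l = 2 \<and> leaves r = 2) \<or> (leaves l = 3 \<and> leaves r = 1)" by auto
  then show ?thesis
  proof (elim disjE conjE)
    assume "leaves l = 2" "leaves r = 2"
    with Node show ?thesis using j c[of "m x x" x] c[of x "m x (m x x)"]
      by (simp add: L2)
  qed (use Node c in \<open>auto simp: L1 L3[OF c]\<close>)
qed (use assms in simp)

lemma L5:
  assumes c: "\<And>a b. m a b = m b a" and j: "m (m x x) (m x x) = m (m (m x x) x) x"
    and j2: "m (m x x) (m (m x x) x) = m (m (m x x) (m x x)) x"
    and "leaves t = 5"
  shows "beval m x t = m x (m x (m x (m x x)))"
proof (cases t)
  case (Node l r)
  with assms(4) leaves_pos[of l] leaves_pos[of r]
  have "(leaves l = 1 \<and> leaves r = 4) \<or> (leaves l = 2 \<and> leaves r = 3) \<or> (leaves l = 3 \<and> leaves r = 2) \<or> (leaves l = 4 \<and> leaves r = 1)" by auto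
  moreover have key: "m (m x x) (m x (m x x)) = m x (m x (m x (m x x)))"
  proof -
    have "m (m x x) (m x (m x x)) = m (m x x) (m (m x x) x)" using c by metis
    also have "\<dots> = m (m (m x x) (m x x)) x" by (rule j2)
    also have "\<dots> = m (m (m (m x x) x) x) x" using j by simp
    also have "\<dots> = m x (m x (m x (m x x)))" using c by metis
    finally show ?thesis .
  qed
  ultimately show ?thesis
    using Node c[of "m x (m x x)" "m x x"] c[of "m x (m x (m x x))" x]
    by (auto simp: L1 L2 L3[OF c] L4[OF c j] key)
qed (use assms in simp)

theorem lemma2p1:
  fixes m :: "'a \<Rightarrow> 'a \<Rightarrow> 'a" and e x :: 'a
  assumes "jordan_loop m e"
  shows "pow_well_defined m e x 3 \<and> pow_well_defined m e x 4 \<and> pow_well_defined m e x 5"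
proof -
  have c: "\<And>a b. m a b = m b a" and jj: "\<And>x y. m (m x x) (m y x) = m (m (m x x) y) x"
    and ue: "m x e = x"
    using assms unfolding jordan_loop_def is_loop_def by auto
  have j: "m (m x x) (m x x) = m (m (m x x) x) x" by (rule jj)
  have j2: "m (m x x) (m (m x x) x) = m (m (m x x) (m x x)) x" by (rule jj)
  have p3: "lpow m e x 3 = m x (m x x)" by (simp add: lpow_def numeral_eq_Suc ue)
  have p4: "lpow m e x 4 = m x (m x (m x x))" by (simp add: lpow_def numeral_eq_Suc ue)
  have p5: "lpow m e x 5 = m x (m x (m x (m x x)))" by (simp add: lpow_def numeral_eq_Suc ue)
  show ?thesis unfolding pow_well_defined_def p3 p4 p5
    using L3[where m=m and x=x, OF c] L4[OF c j] L5[OF c j j2] by blast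
qed

end
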